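(* Assume $p\nmid a$. For all integers $r,s,t$ there exists a constant $C$ (depending on $r,s,t$) such that for every integer $v\ge C$, $$\#\Omega_{v,r,s,t}=1-g+v+(q^{a-1}-1)r+q^{b-1}s+(q-1)t.$$
   Context: Let $p$ be a prime, $q$ a power of $p$, $b\ge1$ an integer, $a=b+1$, $c=a+b$, $N_k=(q^k-1)/(q-1)$, and $g=\frac12\big((q^c-2)(q^{a-1}+q^{b-1}-2)+(q^c-q)\big)$. For integers $v,r,s,t$ define the lattice point set $\Omega_{v,r,s,t}=\{(i,j,k)\in\mathbb{Z}^3:\ -v\le i,\ \ -r\le i+(q^c-1)k<-r+(q^c-1),\ \ -s\le -q^ai+(q^c-1)j<(q^c-1)-s,\ \ -t\le q^{a-1}N_b\,i-q^{b-1}N_c\,j-(q^{a-1}-1)N_c\,k\}$. *)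

theory Defs
  imports Complex_Main "HOL-Computational_Algebra.Primes"
begin

definition N :: "int \<Rightarrow> nat \<Rightarrow> int" where
  "N q k = (q ^ k - 1) div (q - 1)"

definition genus :: "int \<Rightarrow> nat \<Rightarrow> nat \<Rightarrow> rat" where
  "genus q a b = (let c = a + b in
     (of_int ((q ^ c - 2) * (q ^ (a - 1) + q ^ (b - 1) - 2) + (q ^ c - q))) / 2)"

definition Omega :: "int \<Rightarrow> nat \<Rightarrow> nat \<Rightarrow> int \<Rightarrow> int \<Rightarrow> int \<Rightarrow> int \<Rightarrow> (int \<times> int \<times> int) set" where
  "Omega q a b v r s t = (let c = a + b in
     {(i, j, k). - v \<le> i
       \<and> - r \<le> i + (q ^ c - 1) * k \<and> i + (q ^ c - 1) * k < - r + (q ^ c - 1)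
       \<and> - s \<le> - (q ^ a) * i + (q ^ c - 1) * j \<and> - (q ^ a) * i + (q ^ c - 1) * j < (q ^ c - 1) - s
       \<and> - t \<le> q ^ (a - 1) * N q b * i - q ^ (b - 1) * N q c * j - (q ^ (a - 1) - 1) * N q c * k})"

end

theory Submission imports Defs begin

lemma int_ivl_Suc: "{x0..<x0 + int (Suc n)} = insert (x0 + int n) {x0..<x0 + int n}"
  for x0 :: int by auto

lemma gauss_int: "2 * (\<Sum>i\<in>{x0..<x0 + int n}. i) = int n * (2 * x0 + int n - 1)"
  for x0 :: int
proof (induction n)
  case 0 then show ?case by simp
next
  case (Suc n)
  have "(\<Sum>i\<in>{x0..<x0 + int (Suc n)}. i) = (x0 + int n) + (\<Sum>i\<in>{x0..<x0 + int n}. i)"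
    unfolding int_ivl_Suc by (subst sum.insert) auto
  then show ?case using Suc by (simp add: algebra_simps)
qed

lemma resid_inj:
  fixes m n t :: int
  assumes n: "n > 0" and cop: "coprime m n"
  shows "inj_on (\<lambda>i. (m*i+t) mod n) {x0..<x0+n}"
proof
  fix i j assume i: "i \<in> {x0..<x0+n}" and j: "j \<in> {x0..<x0+n}" and e: "(m*i+t) mod n = (m*j+t) mod n"
  have "n dvd (m*i+t) - (m*j+t)" using e by (simp add: mod_eq_dvd_iff)
  then have "n dvd m * (i - j)" by (simp add: algebra_simps)
  then have "n dvd (i - j)" using cop by (simp add: coprime_commute coprime_dvd_mult_right_iff)
  then obtain k where k: "i - j = n * k" by blast
  have "\<bar>n*k\<bar> < n" using i j k by auto
  then have "k = 0" using n
    by (metis abs_mult abs_of_pos less_irrefl mult_cancel_left1 mult_less_cancel_left_pos zabs_less_one_iff)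
  then show "i = j" using k by simp
qed

lemma resid_image:
  fixes m n t :: int
  assumes n: "n > 0" and cop: "coprime m n"
  shows "(\<lambda>i. (m*i+t) mod n) ` {x0..<x0+n} = {0..<n}"
proof -
  let ?g = "\<lambda>i. (m*i+t) mod n"
  have sub: "?g ` {x0..<x0+n} \<subseteq> {0..<n}" using n by auto
  have "card (?g ` {x0..<x0+n}) = card {x0..<x0+n}"
    using resid_inj[OF n cop] by (rule card_image)
  also have "\<dots> = card {0..<n}" by simp
  finally show ?thesis using sub by (intro card_subset_eq) auto
qed

lemma resid_sum:
  fixes m n t :: int
  assumes n: "n > 0" and cop: "coprime m n"
  shows "2 * (\<Sum>i\<in>{x0..<x0+n}. (m*i+t) mod n) = n * (n - 1)"
proof -
  have "(\<Sum>i\<in>{x0..<x0+n}. (m*i+t) mod n) = (\<Sum>y\<in>{0..<n}. y)"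
    using sum.reindex[OF resid_inj[OF n cop, of t x0], of id] resid_image[OF n cop, of t x0]
    by simp
  moreover have "2 * (\<Sum>y\<in>{0..<0 + int (nat n)}. y) = int (nat n) * (2*0 + int (nat n) - 1)"
    by (rule gauss_int)
  ultimately show ?thesis using n by simp
qed

lemma resid_sum_blocks:
  fixes m n t :: int
  assumes n: "n > 0" and cop: "coprime m n"
  shows "2 * (\<Sum>i\<in>{x0..<x0+int l*n}. (m*i+t) mod n) = int l * n * (n - 1)"
proof (induction l)
  case 0 then show ?case by simp
next
  case (Suc l)
  have d: "{x0..<x0+int (Suc l)*n} = {x0..<x0+int l*n} \<union> {x0+int l*n..<(x0+int l*n)+n}"
  proof -
    have "0 \<le> int l * n" "0 \<le> n * int l" using n by simp_all
    then show ?thesis using n by (auto simp: algebra_simps; smt (verit))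
  qed
  have "(\<Sum>i\<in>{x0..<x0+int (Suc l)*n}. (m*i+t) mod n) =
      (\<Sum>i\<in>{x0..<x0+int l*n}. (m*i+t) mod n) + (\<Sum>i\<in>{x0+int l*n..<(x0+int l*n)+n}. (m*i+t) mod n)"
    unfolding d by (rule sum.union_disjoint) auto
  then show ?case using Suc resid_sum[OF n cop, of t "x0+int l*n"] by (simp add: algebra_simps)
qed


lemma N_mult: assumes "q \<ge> 2" shows "(q - 1) * N q k = q ^ k - 1"
proof -
  have "q ^ k - 1 = (q - 1) * (\<Sum>i<k. q^i)" by (rule power_diff_1_eq)
  then show ?thesis using assms unfolding N_def by simp
qed

lemma coprime_lin: "coprime (d::int) (k * d + 1)"
proof (rule coprimeI)
  fix c assume "c dvd d" "c dvd k * d + 1"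
  then have "c dvd k * d" "c dvd k * d + 1" by auto
  then show "is_unit c" by (metis dvd_add_right_iff)
qed

lemma uniq_window:
  fixes Q w L j :: int assumes Q: "Q > 0"
  shows "(L \<le> w + Q*j \<and> w + Q*j < L + Q) \<longleftrightarrow> j = - ((w - L) div Q)"
proof
  assume h: "L \<le> w + Q*j \<and> w + Q*j < L + Q"
  define d where "d = w + Q*j - L"
  have d0: "0 \<le> d" "d < Q" using h by (auto simp: d_def)
  have "w - L = d + (-j) * Q" by (simp add: d_def algebra_simps)
  then have "(w - L) div Q = (d + (-j) * Q) div Q" by simp
  also have "\<dots> = -j + d div Q" using Q by (intro div_mult_self1) simp
  finally have "(w - L) div Q = d div Q + (-j)" by simp
  also have "d div Q = 0" using d0 by simp
  finally show "j = - ((w - L) div Q)" by simp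
next
  assume "j = - ((w - L) div Q)"
  then have "w + Q*j - L = (w - L) mod Q" by (simp add: algebra_simps minus_div_mult_eq_mod [symmetric])
  moreover have "0 \<le> (w - L) mod Q" "(w - L) mod Q < Q" using Q by auto
  ultimately show "L \<le> w + Q*j \<and> w + Q*j < L + Q" by linarith
qed


lemma le_div_iff_int:
  fixes n X k :: int assumes k: "0 < k"
  shows "n \<le> X div k \<longleftrightarrow> n * k \<le> X"
proof
  assume "n \<le> X div k"
  then have "n * k \<le> (X div k) * k" using k by (simp add: mult_right_mono)
  also have "(X div k) * k = X - X mod k" by (simp add: minus_mod_eq_div_mult)
  also have "\<dots> \<le> X" using k by simp
  finally show "n * k \<le> X" .
next
  assume h: "n * k \<le> X"
  show "n \<le> X div k"
  proof (rule ccontr)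
    assume "\<not> n \<le> X div k"
    then have "X div k + 1 \<le> n" by simp
    then have "(X div k + 1) * k \<le> n * k" using k by (simp add: mult_right_mono)
    moreover have "(X div k + 1) * k = X - X mod k + k" by (simp add: algebra_simps minus_mod_eq_div_mult)
    moreover have "X mod k < k" using k by simp
    ultimately show False using h by linarith
  qed
qed

lemma card_multiples:
  fixes X k :: int assumes k: "0 < k" and X: "0 \<le> X"
  shows "int (card {n. 0 \<le> n \<and> n * k \<le> X}) = X div k + 1"
proof -
  have "{n. 0 \<le> n \<and> n * k \<le> X} = {0..X div k}" using le_div_iff_int[OF k] by auto
  moreover have "0 \<le> X div k" using k X by (simp add: pos_imp_zdiv_nonneg_iff)
  ultimately show ?thesis by simp
qed

context
  fixes q :: int and b :: nat
begin

definition "QQ = q^(2*b+1) - 1"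
definition "JJ s i = - ((s - q^(b+1)*i) div QQ)"
definition "KK r i = - ((r + i) div QQ)"
definition "FF r s i = q^b * N q b * i - q^(b-1) * N q (2*b+1) * JJ s i - (q^b - 1) * N q (2*b+1) * KK r i"

end

locale qb =
  fixes q :: int and b :: nat
  assumes q2: "q \<ge> 2" and b1: "b \<ge> 1"
begin

abbreviation "Q \<equiv> QQ q b"
abbreviation "NC \<equiv> N q (2*b+1)"
abbreviation "NB \<equiv> N q b"
abbreviation "Y \<equiv> q^(b-1)"

lemma xY: "q^b = q * Y" using b1 by (metis power_Suc Suc_diff_1 less_le_trans zero_less_one)
lemma AY: "q^(b+1) = q * q * Y" using xY by simp
lemma c2: "q^(2*b+1) = q * q^b * q^b"
proof -
  have "2*b+1 = Suc (b + b)" by simp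
  then have "q^(2*b+1) = q * q^(b+b)" by (simp only: power_Suc)
  then show ?thesis by (simp add: power_add)
qed
lemma cY: "q^(2*b+1) = q * q * q * Y * Y"
  using c2 xY by (simp add: algebra_simps)

lemma Q_NC: "Q = (q - 1) * NC" using N_mult[OF q2] by (simp add: QQ_def)
lemma NB_eq: "(q - 1) * NB = q^b - 1" using N_mult[OF q2] by simp

lemma Q_pos: "Q > 0"
proof -
  have "q^(2*b+1) \<ge> q" using q2 power_increasing[of 1 "2*b+1" q] by simp
  then show ?thesis using q2 unfolding QQ_def by linarith
qed

lemma NC_pos: "NC > 0"
  using Q_pos Q_NC q2 by (simp add: zero_less_mult_iff)

lemma NC_eq: "NC = (q * q^b + q) * NB + 1"
proof -
  have "(q - 1) * ((q * q^b + q) * NB + 1) = (q * q^b + q) * ((q - 1) * NB) + (q - 1)"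
    by (simp add: algebra_simps)
  also have "\<dots> = (q * q^b + q) * (q^b - 1) + (q - 1)" using NB_eq by simp
  also have "\<dots> = q * q^b * q^b - 1" by (simp add: algebra_simps)
  also have "\<dots> = (q - 1) * NC"
  proof -
    have h: "q^(2*b+1) - 1 = (q-1)*NC" using Q_NC by (simp only: QQ_def)
    show ?thesis using h unfolding c2 .
  qed
  finally have h2: "(q - 1) * ((q * q^b + q) * NB + 1) = (q - 1) * NC" .
  have "q - 1 \<noteq> 0" using q2 by simp
  then have "(q * q^b + q) * NB + 1 = NC" using h2 by (rule mult_left_cancel[THEN iffD1])
  then show ?thesis by simp
qed

lemma cop1: "coprime (q^b * NB) NC"
proof -
  have c1: "coprime NB NC" using NC_eq coprime_lin[of NB "q * q^b + q"] by simp
  have "NC = ((q^b + 1) * NB) * q + 1" using NC_eq by (simp add: algebra_simps)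
  then have "coprime q NC" using coprime_lin[of q "(q^b + 1) * NB"] by simp
  then have "coprime (q^b) NC" by simp
  then show ?thesis using c1 by simp
qed

lemma cop2: "coprime (- (q^(b+1))) Q"
proof -
  have e: "Q = q^(b+1) * q^b - 1"
    unfolding QQ_def using c2 by (simp add: algebra_simps)
  have "coprime (q^(b+1)) Q"
  proof (rule coprimeI)
    fix c assume "c dvd q^(b+1)" "c dvd Q"
    then have "c dvd q^(b+1) * q^b" "c dvd q^(b+1) * q^b - 1" using e by auto
    then have "c dvd (q^(b+1) * q^b) - (q^(b+1) * q^b - 1)" by (rule dvd_diff)
    then show "is_unit c" by simp
  qed
  then show ?thesis by simp
qed

end

lemma final_alg:
  fixes q Y NB NC Q v r s t Si SR1 SR2 SR3 Sig :: int
  assumes hQ: "Q = (q-1)*NC" and hc: "(q-1)*NC = q*q*q*Y*Y - 1" and hB: "(q-1)*NB = q*Y - 1"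
    and hSi: "2*Si = Q*(Q-1-2*v)" and hR1: "2*SR1 = (q-1)*NC*(NC-1)"
    and hR2: "2*SR2 = Q*(Q-1)" and hR3: "2*SR3 = Q*(Q-1)"
    and hS: "Sig*(Q*NC) = Q*(q*Y*NB*Si + Q*t - SR1) - Y*NC*(q*q*Y*Si - Q*s + SR2)
               - (q*Y-1)*NC*(-Q*r - Si + SR3) + Q*Q*NC"
  shows "(2*Sig) * (Q*NC) = (2 + 2*v + 2*(q*Y-1)*r + 2*Y*s + 2*(q-1)*t
      - ((q*q*q*Y*Y - 2)*(q*Y + Y - 2) + (q*q*q*Y*Y - q))) * (Q*NC)"
  using assms by algebra

lemma count_gen:
  fixes F :: "int \<Rightarrow> int" and Q NC v t :: int
  assumes Q: "Q > 0" and NC: "NC > 0" and shift: "\<And>i n. F (i + Q*n) = F i - n*NC"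
  shows "card {i. -v \<le> i \<and> -t \<le> F i} =
    (\<Sum>i0\<in>{-v..<-v+Q}. card {n. 0 \<le> n \<and> n*NC \<le> F i0 + t})"
proof -
  define W where "W = {-v..<-v+Q}"
  define B where "B i0 = {n. 0 \<le> n \<and> n*NC \<le> F i0 + t}" for i0
  define h where "h = (\<lambda>(i0, n). i0 + Q*n)"
  have finB: "finite (B i0)" for i0
  proof -
    have "B i0 \<subseteq> {0..F i0 + t}"
    proof
      fix n assume "n \<in> B i0"
      then have "0 \<le> n" "n*NC \<le> F i0 + t" by (auto simp: B_def)
      moreover have "n \<le> n*NC" using \<open>0 \<le> n\<close> NC by (simp add: mult_le_cancel_left1)
      ultimately show "n \<in> {0..F i0 + t}" by auto
    qed
    then show ?thesis by (rule finite_subset) simp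
  qed
  have inj: "inj_on h (SIGMA i0:W. B i0)"
  proof (rule inj_onI)
    fix x y assume x: "x \<in> (SIGMA i0:W. B i0)" and y: "y \<in> (SIGMA i0:W. B i0)" and e: "h x = h y"
    obtain i0 n where xe: "x = (i0, n)" by fastforce
    obtain i1 m where ye: "y = (i1, m)" by fastforce
    have i0: "-v \<le> i0" "i0 < -v + Q" and i1: "-v \<le> i1" "i1 < -v + Q" using x y xe ye by (auto simp: W_def)
    have e2: "(i0 + v) + Q*n = (i1 + v) + Q*m" using e xe ye by (simp add: h_def)
    have "(i0 + v) = ((i0 + v) + Q*n) mod Q" using i0 by simp
    also have "\<dots> = ((i1 + v) + Q*m) mod Q" by (simp only: e2)
    also have "\<dots> = i1 + v" using i1 by simp
    finally have "i0 = i1" by simp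
    then have "n = m" using e2 Q by simp
    then show "x = y" using xe ye \<open>i0 = i1\<close> by simp
  qed
  have img: "{i. -v \<le> i \<and> -t \<le> F i} = h ` (SIGMA i0:W. B i0)"
  proof (rule set_eqI, rule iffI)
    fix i assume "i \<in> {i. -v \<le> i \<and> -t \<le> F i}"
    then have i: "-v \<le> i" "-t \<le> F i" by auto
    define i0 where "i0 = -v + (i + v) mod Q"
    define n where "n = (i + v) div Q"
    have ie: "i = i0 + Q*n" by (simp add: i0_def n_def algebra_simps)
    have "i0 \<in> W" using Q by (simp add: W_def i0_def)
    moreover have "0 \<le> n" using i Q by (simp add: n_def pos_imp_zdiv_nonneg_iff)
    moreover have "n*NC \<le> F i0 + t" using shift[of i0 n] ie i by simp
    ultimately have "(i0, n) \<in> (SIGMA i0:W. B i0)" by (simp add: B_def)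
    then show "i \<in> h ` (SIGMA i0:W. B i0)" using ie by (force simp: h_def)
  next
    fix i assume "i \<in> h ` (SIGMA i0:W. B i0)"
    then obtain i0 n where m: "i0 \<in> W" "n \<in> B i0" and ie: "i = i0 + Q*n" by (auto simp: h_def)
    have "0 \<le> Q*n" using m Q by (simp add: B_def)
    then have "-v \<le> i" using m ie by (simp add: W_def)
    moreover have "-t \<le> F i" using shift[of i0 n] ie m by (simp add: B_def)
    ultimately show "i \<in> {i. -v \<le> i \<and> -t \<le> F i}" by simp
  qed
  have "card {i. -v \<le> i \<and> -t \<le> F i} = card (SIGMA i0:W. B i0)"
    unfolding img by (rule card_image[OF inj])
  also have "\<dots> = (\<Sum>i0\<in>W. card (B i0))"
    by (rule card_SigmaI) (auto simp: W_def finB)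
  finally show ?thesis by (simp add: W_def B_def)
qed


context qb begin

lemma kk_iff: "(-r \<le> i + Q*k \<and> i + Q*k < -r + Q) \<longleftrightarrow> k = KK q b r i"
  using uniq_window[OF Q_pos, of "-r" i k] by (simp add: KK_def add.commute)

lemma jj_iff: "(-s \<le> -(q^(b+1))*i + Q*j \<and> -(q^(b+1))*i + Q*j < -s + Q) \<longleftrightarrow> j = JJ q b s i"
proof -
  have e: "-(q^(b+1))*i - -s = s - q^(b+1)*i" by simp
  show ?thesis using uniq_window[OF Q_pos, of "-s" "-(q^(b+1))*i" j] unfolding e by (simp add: JJ_def)
qed

lemma Omega_eq:
  "Omega q (b+1) b v r s t = (\<lambda>i. (i, JJ q b s i, KK q b r i)) ` {i. -v \<le> i \<and> -t \<le> FF q b r s i}"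
proof -
  have c: "b + 1 + b = 2*b+1" by simp
  have O: "Omega q (b+1) b v r s t = {(i,j,k). -v \<le> i
       \<and> (-r \<le> i + Q*k \<and> i + Q*k < -r + Q)
       \<and> (-s \<le> -(q^(b+1))*i + Q*j \<and> -(q^(b+1))*i + Q*j < -s + Q)
       \<and> -t \<le> q^b * NB * i - Y * NC * j - (q^b - 1) * NC * k}"
    unfolding Omega_def Let_def c QQ_def by (simp add: algebra_simps)
  show ?thesis unfolding O jj_iff unfolding kk_iff by (auto simp: FF_def)
qed

lemma card_Omega: "card (Omega q (b+1) b v r s t) = card {i. -v \<le> i \<and> -t \<le> FF q b r s i}"
  unfolding Omega_eq by (rule card_image) (auto intro: inj_onI)

lemma JJ_shift: "JJ q b s (i + Q*n) = JJ q b s i + q^(b+1)*n"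
proof -
  have e: "s - q^(b+1)*(i + Q*n) = (s - q^(b+1)*i) + (-(q^(b+1)*n))*Q" by (simp add: algebra_simps)
  have Q0: "Q \<noteq> 0" using Q_pos by simp
  have "(s - q^(b+1)*(i + Q*n)) div Q = -(q^(b+1)*n) + (s - q^(b+1)*i) div Q"
    by (simp only: e div_mult_self1[OF Q0])
  then show ?thesis by (simp add: JJ_def)
qed

lemma KK_shift: "KK q b r (i + Q*n) = KK q b r i - n"
proof -
  have e: "r + (i + Q*n) = (r + i) + n*Q" by (simp add: algebra_simps)
  have Q0: "Q \<noteq> 0" using Q_pos by simp
  have "(r + (i + Q*n)) div Q = n + (r + i) div Q" by (simp only: e div_mult_self1[OF Q0])
  then show ?thesis by (simp add: KK_def)
qed

lemma key_id: "q^b * NB * Q - Y * NC * q^(b+1) + (q^b - 1) * NC = - NC"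
proof -
  have "q^b * NB * Q = q^b * ((q-1)*NB) * NC" unfolding Q_NC by (simp add: algebra_simps)
  also have "\<dots> = q^b * (q^b - 1) * NC" using NB_eq by simp
  finally have 1: "q^b * NB * Q = q^b * (q^b - 1) * NC" .
  have 2: "Y * q^(b+1) = q^b * q^b" using xY AY by (simp add: algebra_simps)
  have 3: "Y * NC * q^(b+1) = q^b * q^b * NC" using 2 by (metis mult.commute mult.assoc)
  show ?thesis unfolding 1 3 by (simp add: algebra_simps)
qed

lemma FF_shift: "FF q b r s (i + Q*n) = FF q b r s i - n*NC"
proof -
  have "FF q b r s (i + Q*n) = FF q b r s i + n * (q^b * NB * Q - Y * NC * q^(b+1) + (q^b - 1) * NC)"
    unfolding FF_def JJ_shift KK_shift by (simp add: algebra_simps)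
  then show ?thesis unfolding key_id by simp
qed

lemma card_count: "card {i. -v \<le> i \<and> -t \<le> FF q b r s i} =
    (\<Sum>i0\<in>{-v..<-v+Q}. card {n. 0 \<le> n \<and> n*NC \<le> FF q b r s i0 + t})"
  by (rule count_gen[OF Q_pos NC_pos FF_shift])

end

context qb begin

lemma QJ: "Q * JJ q b s i = q^(b+1)*i - s + (s - q^(b+1)*i) mod Q"
proof -
  have "Q * ((s - q^(b+1)*i) div Q) = (s - q^(b+1)*i) - (s - q^(b+1)*i) mod Q"
    by (simp add: minus_mod_eq_mult_div)
  then show ?thesis by (simp add: JJ_def algebra_simps)
qed

lemma QK: "Q * KK q b r i = -(r + i) + (r + i) mod Q"
proof -
  have "Q * ((r + i) div Q) = (r + i) - (r + i) mod Q"
    by (simp add: minus_mod_eq_mult_div)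
  then show ?thesis by (simp add: KK_def algebra_simps)
qed

lemma FF_lower: "Q * FF q b r s i \<ge> - NC * i + (Y * NC * (s - Q) + (q^b - 1) * NC * (r - Q))"
proof -
  have j: "Q * JJ q b s i \<le> q^(b+1)*i - s + Q" using QJ[of s i] Q_pos
    by (smt (verit) pos_mod_bound)
  have k: "Q * KK q b r i \<le> -(r + i) + Q" using QK[of r i] Q_pos
    by (smt (verit) pos_mod_bound)
  have c1: "0 \<le> Y * NC" using q2 NC_pos by simp
  have c2: "0 \<le> (q^b - 1) * NC" using q2 NC_pos
    by (simp add: one_le_power)
  have "Q * FF q b r s i = q^b * NB * Q * i - (Y * NC) * (Q * JJ q b s i) - ((q^b - 1) * NC) * (Q * KK q b r i)"
    by (simp add: FF_def algebra_simps)
  also have "\<dots> \<ge> q^b * NB * Q * i - (Y * NC) * (q^(b+1)*i - s + Q) - ((q^b - 1) * NC) * (-(r + i) + Q)"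
    using mult_left_mono[OF j c1] mult_left_mono[OF k c2] by linarith
  finally have "Q * FF q b r s i \<ge> q^b * NB * Q * i - (Y * NC) * (q^(b+1)*i - s + Q) - ((q^b - 1) * NC) * (-(r + i) + Q)" .
  moreover have "q^b * NB * Q * i - (Y * NC) * (q^(b+1)*i - s + Q) - ((q^b - 1) * NC) * (-(r + i) + Q)
     = i * (q^b * NB * Q - Y * NC * q^(b+1) + (q^b - 1) * NC) + (Y * NC * (s - Q) + (q^b - 1) * NC * (r - Q))"
    by (simp add: algebra_simps)
  ultimately show ?thesis unfolding key_id by (simp add: algebra_simps)
qed

lemma eventually_nonneg:
  "\<exists>C. \<forall>v \<ge> C. \<forall>i0\<in>{-v..<-v+Q}. 0 \<le> FF q b r s i0 + t"
proof -
  define K0 where "K0 = Y * NC * (s - Q) + (q^b - 1) * NC * (r - Q)"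
  show ?thesis
  proof (intro exI allI impI ballI)
    fix v i0 assume v: "Q + \<bar>K0\<bar> + Q * \<bar>t\<bar> \<le> v" and i0: "i0 \<in> {-v..<-v+Q}"
    have "0 \<le> Q * \<bar>t\<bar>" using Q_pos by simp
    then have vQ: "0 \<le> v - Q" using v by linarith
    have "NC * (v - Q) \<ge> 1 * (v - Q)" using NC_pos vQ by (intro mult_right_mono) auto
    moreover have "- NC * i0 \<ge> NC * (v - Q)"
    proof -
      have "v - Q \<le> -i0" using i0 by auto
      then have "NC * (v - Q) \<le> NC * (-i0)" using NC_pos by (intro mult_left_mono) auto
      then show ?thesis by simp
    qed
    moreover have "Q * FF q b r s i0 \<ge> - NC * i0 + K0" using FF_lower unfolding K0_def .
    moreover have "Q * t \<ge> - (Q * \<bar>t\<bar>)"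
    proof -
      have "Q * (-\<bar>t\<bar>) \<le> Q * t" using Q_pos by (intro mult_left_mono) auto
      then show ?thesis by simp
    qed
    ultimately have "Q * (FF q b r s i0 + t) \<ge> 0" using v by (simp add: algebra_simps)
    then show "0 \<le> FF q b r s i0 + t" using Q_pos by (simp add: zero_le_mult_iff)
  qed
qed

end

context qb begin

lemma card_formula:
  assumes nn: "\<forall>i0\<in>{-v..<-v+Q}. 0 \<le> FF q b r s i0 + t"
  shows "2 * int (card (Omega q (b+1) b v r s t)) =
    2 + 2*v + 2*(q^b - 1)*r + 2*Y*s + 2*(q-1)*t
      - ((q^(2*b+1) - 2)*(q^b + Y - 2) + (q^(2*b+1) - q))"
proof -
  define W where "W = {-v..<-v+Q}"
  define D where "D i = (q^b * NB * i + t) div NC" for i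
  define Sig where "Sig = (\<Sum>i\<in>W. (FF q b r s i + t) div NC + 1)"
  have NC0: "NC \<noteq> 0" using NC_pos by simp
  have cardW: "int (card W) = Q" using Q_pos by (simp add: W_def)
  have "int (card (Omega q (b+1) b v r s t)) = int (\<Sum>i0\<in>W. card {n. 0 \<le> n \<and> n*NC \<le> FF q b r s i0 + t})"
    unfolding card_Omega card_count W_def ..
  also have "\<dots> = (\<Sum>i0\<in>W. int (card {n. 0 \<le> n \<and> n*NC \<le> FF q b r s i0 + t}))" by simp
  also have "\<dots> = Sig" unfolding Sig_def
    by (rule sum.cong) (use nn card_multiples[OF NC_pos] in \<open>auto simp: W_def\<close>)
  finally have cS: "int (card (Omega q (b+1) b v r s t)) = Sig" .
  have divF: "(FF q b r s i + t) div NC = D i - (Y * JJ q b s i + (q^b - 1) * KK q b r i)" for i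
  proof -
    have e: "FF q b r s i + t = (q^b * NB * i + t) + (-(Y * JJ q b s i + (q^b - 1) * KK q b r i)) * NC"
      by (simp add: FF_def algebra_simps)
    show ?thesis unfolding e div_mult_self1[OF NC0] D_def by simp
  qed
  define SD where "SD = (\<Sum>i\<in>W. D i)"
  define SJ where "SJ = (\<Sum>i\<in>W. JJ q b s i)"
  define SK where "SK = (\<Sum>i\<in>W. KK q b r i)"
  define Si where "Si = (\<Sum>i\<in>W. i)"
  define SR1 where "SR1 = (\<Sum>i\<in>W. (q^b * NB * i + t) mod NC)"
  define SR2 where "SR2 = (\<Sum>i\<in>W. (s - q^(b+1)*i) mod Q)"
  define SR3 where "SR3 = (\<Sum>i\<in>W. (r + i) mod Q)"
  have SigE: "Sig = SD - Y * SJ - (q^b - 1) * SK + Q"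
    unfolding Sig_def divF SD_def SJ_def SK_def
    by (simp add: sum.distrib sum_subtractf sum_distrib_left cardW)
  have SDE: "NC * SD = q^b * NB * Si + Q * t - SR1"
  proof -
    have "NC * SD = (\<Sum>i\<in>W. NC * D i)" by (simp add: SD_def sum_distrib_left)
    also have "\<dots> = (\<Sum>i\<in>W. q^b * NB * i + t - (q^b * NB * i + t) mod NC)"
      by (rule sum.cong) (simp_all add: D_def minus_mod_eq_mult_div)
    also have "\<dots> = q^b * NB * Si + Q * t - SR1"
      by (simp add: sum_subtractf sum.distrib sum_distrib_left Si_def SR1_def cardW)
    finally show ?thesis .
  qed
  have SJE: "Q * SJ = q^(b+1) * Si - Q * s + SR2"
  proof -
    have "Q * SJ = (\<Sum>i\<in>W. Q * JJ q b s i)" by (simp add: SJ_def sum_distrib_left)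
    also have "\<dots> = (\<Sum>i\<in>W. q^(b+1)*i - s + (s - q^(b+1)*i) mod Q)"
      by (rule sum.cong) (simp_all add: QJ)
    also have "\<dots> = q^(b+1) * Si - Q * s + SR2"
      by (simp add: sum_subtractf sum.distrib sum_distrib_left Si_def SR2_def cardW)
    finally show ?thesis .
  qed
  have SKE: "Q * SK = - Q * r - Si + SR3"
  proof -
    have "Q * SK = (\<Sum>i\<in>W. Q * KK q b r i)" by (simp add: SK_def sum_distrib_left)
    also have "\<dots> = (\<Sum>i\<in>W. -(r + i) + (r + i) mod Q)"
      by (rule sum.cong) (simp_all add: QK)
    also have "\<dots> = - Q * r - Si + SR3"
      by (simp add: sum_subtractf sum.distrib sum_distrib_left Si_def SR3_def cardW sum_negf)
    finally show ?thesis .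
  qed
  have hSi: "2 * Si = Q * (Q - 1 - 2*v)"
    using gauss_int[of "-v" "nat Q"] Q_pos by (simp add: Si_def W_def algebra_simps)
  have hR1: "2 * SR1 = (q-1) * NC * (NC - 1)"
  proof -
    have "W = {-v..<-v + int (nat (q-1)) * NC}" using Q_NC q2 by (simp add: W_def)
    then show ?thesis using resid_sum_blocks[OF NC_pos cop1, of t "-v" "nat (q-1)"] q2
      by (simp add: SR1_def)
  qed
  have hR2: "2 * SR2 = Q * (Q - 1)"
  proof -
    have "SR2 = (\<Sum>i\<in>{-v..<-v+Q}. ((-(q^(b+1)))*i + s) mod Q)"
      unfolding SR2_def W_def by (rule sum.cong) (simp_all add: algebra_simps)
    then show ?thesis using resid_sum[OF Q_pos cop2, of s "-v"] by simp
  qed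
  have hR3: "2 * SR3 = Q * (Q - 1)"
  proof -
    have "SR3 = (\<Sum>i\<in>{-v..<-v+Q}. (1*i + r) mod Q)"
      unfolding SR3_def W_def by (rule sum.cong) (simp_all add: algebra_simps)
    then show ?thesis using resid_sum[OF Q_pos, of 1 r "-v"] by simp
  qed
  have hS0: "Sig * (Q * NC) = Q * (NC * SD) - Y * NC * (Q * SJ) - (q^b - 1) * NC * (Q * SK) + Q * Q * NC"
    unfolding SigE by (simp add: algebra_simps)
  have hS: "Sig*(Q*NC) = Q*(q*Y*NB*Si + Q*t - SR1) - Y*NC*(q*q*Y*Si - Q*s + SR2)
               - (q*Y-1)*NC*(-Q*r - Si + SR3) + Q*Q*NC"
    using hS0 unfolding SDE SJE SKE AY xY .
  have hc: "(q-1)*NC = q*q*q*Y*Y - 1"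
  proof -
    have h: "q^(2*b+1) - 1 = (q-1)*NC" using Q_NC by (simp only: QQ_def)
    show ?thesis using h[unfolded cY] by linarith
  qed
  have hB: "(q-1)*NB = q*Y - 1" using NB_eq xY by simp
  have fin: "(2*Sig) * (Q*NC) = (2 + 2*v + 2*(q*Y-1)*r + 2*Y*s + 2*(q-1)*t
      - ((q*q*q*Y*Y - 2)*(q*Y + Y - 2) + (q*q*q*Y*Y - q))) * (Q*NC)"
    by (rule final_alg[OF Q_NC hc hB hSi hR1 hR2 hR3 hS])
  have "Q * NC \<noteq> 0" using Q_pos NC_pos by simp
  then have "2*Sig = 2 + 2*v + 2*(q*Y-1)*r + 2*Y*s + 2*(q-1)*t
      - ((q*q*q*Y*Y - 2)*(q*Y + Y - 2) + (q*q*q*Y*Y - q))"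
    using fin by simp
  then show ?thesis using cS unfolding cY xY by simp
qed

end

theorem proposition4:
  fixes p :: nat and m b a :: nat and q :: int
  assumes "prime p" and "m \<ge> 1" and "q = int p ^ m"
    and "b \<ge> 1" and "a = b + 1"
    and "\<not> p dvd a"
  shows "\<forall>r s t :: int. \<exists>C :: int. \<forall>v :: int. v \<ge> C \<longrightarrow>
    of_nat (card (Omega q a b v r s t)) =
      1 - genus q a b + of_int (v + (q ^ (a - 1) - 1) * r + q ^ (b - 1) * s + (q - 1) * t)"
proof (intro allI)
  fix r s t :: int
  have p2: "int p \<ge> 2" using assms(1) prime_ge_2_nat by fastforce
  have q2: "q \<ge> 2"
  proof -
    have "int p ^ 1 \<le> int p ^ m" using p2 assms(2) by (intro power_increasing) auto
    then have "int p \<le> q" using assms(3) by simp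
    then show ?thesis using p2 by linarith
  qed
  interpret qb q b using q2 assms(4) by unfold_locales
  obtain C where C: "\<forall>v \<ge> C. \<forall>i0\<in>{-v..<-v+QQ q b}. 0 \<le> FF q b r s i0 + t"
    using eventually_nonneg[of r s t] by blast
  show "\<exists>C :: int. \<forall>v :: int. v \<ge> C \<longrightarrow>
    of_nat (card (Omega q a b v r s t)) =
      1 - genus q a b + of_int (v + (q ^ (a - 1) - 1) * r + q ^ (b - 1) * s + (q - 1) * t)"
  proof (intro exI allI impI)
    fix v assume v: "C \<le> v"
    define G2 where "G2 = (q^(2*b+1) - 2)*(q^b + q^(b-1) - 2) + (q^(2*b+1) - q)"
    define X where "X = v + (q ^ b - 1) * r + q ^ (b - 1) * s + (q - 1) * t"
    have h: "2 * int (card (Omega q (b+1) b v r s t)) = 2 + 2 * X - G2"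
      using card_formula[of v r s t] C v unfolding G2_def X_def by (simp add: algebra_simps)
    have c: "b + 1 + b = 2*b+1" by simp
    have g: "genus q (b+1) b = of_int G2 / 2"
      unfolding genus_def Let_def G2_def c by simp
    have "(2::rat) * of_nat (card (Omega q (b+1) b v r s t)) = of_int (2 + 2 * X - G2)"
      using arg_cong[OF h, of "of_int :: int \<Rightarrow> rat"] by simp
    then have "of_nat (card (Omega q (b+1) b v r s t)) = 1 - (of_int G2 :: rat) / 2 + of_int X"
      by (simp add: field_simps)
    then show "of_nat (card (Omega q a b v r s t)) =
      1 - genus q a b + of_int (v + (q ^ (a - 1) - 1) * r + q ^ (b - 1) * s + (q - 1) * t)"
      unfolding assms(5) g X_def by simp
  qed
qed

end
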